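(* For all $a,b>0$, $H(a,b)\le\lambda_s(a,b)\le G(a,b)$ whenever $-3\le s\le -1$. These bounds are best possible: the inequality $H(a,b)\le \lambda_s(a,b)$ holds for all $a,b>0$ if and only if $s\ge -3$, and the inequality $\lambda_s(a,b)\le G(a,b)$ holds for all $a,b>0$ if and only if $s\le -1$.
   Context: For $a,b>0$ with $a\neq b$ define $$\lambda_s(a,b)=\begin{cases}\dfrac{s-1}{s+1}\cdot\dfrac{a^{s+1}+b^{s+1}-2\left(\frac{a+b}{2}\right)^{s+1}}{a^s+b^s-2\left(\frac{a+b}{2}\right)^s}, & s\in\mathbb{R}\setminus\{-1,0,1\},\\[3mm] \dfrac{2\log\frac{a+b}{2}-\log a-\log b}{\frac{1}{2a}+\frac{1}{2b}-\frac{2}{a+b}}, & s=-1,\\[3mm] \dfrac{a\log a+b\log b-(a+b)\log\frac{a+b}{2}}{2\log\frac{a+b}{2}-\log a-\log b}, & s=0,\\[3mm] \dfrac{(b-a)^2}{4\left(a\log a+b\log b-(a+b)\log\frac{a+b}{2}\right)}, & s=1,\end{cases}$$ and $\lambda_s(a,a)=a$. The harmonic and geometric means are $H(a,b)=2(1/a+1/b)^{-1}$ and $G(a,b)=\sqrt{ab}$. *)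

theory Defs
  imports Complex_Main
begin

definition harm_mean :: "real \<Rightarrow> real \<Rightarrow> real" where
  "harm_mean a b = 2 / (1 / a + 1 / b)"

definition geom_mean :: "real \<Rightarrow> real \<Rightarrow> real" where
  "geom_mean a b = sqrt (a * b)"

definition lam :: "real \<Rightarrow> real \<Rightarrow> real \<Rightarrow> real" where
  "lam s a b =
    (if a = b then a
     else if s = -1 then
       (2 * ln ((a + b) / 2) - ln a - ln b) / (1 / (2 * a) + 1 / (2 * b) - 2 / (a + b))
     else if s = 0 then
       (a * ln a + b * ln b - (a + b) * ln ((a + b) / 2)) / (2 * ln ((a + b) / 2) - ln a - ln b)
     else if s = 1 then
       (b - a)^2 / (4 * (a * ln a + b * ln b - (a + b) * ln ((a + b) / 2)))
     else
       (s - 1) / (s + 1) *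
       ((a powr (s + 1) + b powr (s + 1) - 2 * ((a + b) / 2) powr (s + 1)) /
        (a powr s + b powr s - 2 * ((a + b) / 2) powr s)))"

end

theory Submission
  imports Defs "HOL-Analysis.Analysis" "HOL-Real_Asymp.Real_Asymp"
begin


lemma tent:
  fixes a b :: real and f g h :: "real \<Rightarrow> real"
  assumes ab: "a < b"
  and d1: "\<And>t. a \<le> t \<Longrightarrow> t \<le> b \<Longrightarrow> (f has_real_derivative g t) (at t)"
  and d2: "\<And>t. a \<le> t \<Longrightarrow> t \<le> b \<Longrightarrow> (g has_real_derivative h t) (at t)"
  shows "((\<lambda>t. h t * min (t-a) (b-t)) has_integral (f a + f b - 2 * f ((a+b)/2))) {a..b}"
proof -
  define m where "m = (a+b)/2"
  have am: "a \<le> m" "m \<le> b" using ab by (auto simp: m_def)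
  have i1: "((\<lambda>t. h t * (t-a)) has_integral ((g m * (m-a) - f m) - (g a * (a-a) - f a))) {a..m}"
  proof (rule fundamental_theorem_of_calculus[OF am(1)])
    fix t assume t: "t \<in> {a..m}"
    have "((\<lambda>t. g t * (t-a) - f t) has_real_derivative (h t * (t-a) + g t * 1 - g t)) (at t)"
      using t am d1[of t] d2[of t] by (auto intro!: derivative_eq_intros)
    then show "((\<lambda>t. g t * (t-a) - f t) has_vector_derivative h t * (t-a)) (at t within {a..m})"
      by (simp add: has_real_derivative_iff_has_vector_derivative[symmetric] has_field_derivative_at_within)
  qed
  have i2: "((\<lambda>t. h t * (b-t)) has_integral ((g b * (b-b) + f b) - (g m * (b-m) + f m))) {m..b}"
  proof (rule fundamental_theorem_of_calculus[OF am(2)])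
    fix t assume t: "t \<in> {m..b}"
    have "((\<lambda>t. g t * (b-t) + f t) has_real_derivative (h t * (b-t) + g t * (0-1) + g t)) (at t)"
      using t am d1[of t] d2[of t] by (auto intro!: derivative_eq_intros)
    then show "((\<lambda>t. g t * (b-t) + f t) has_vector_derivative h t * (b-t)) (at t within {m..b})"
      by (simp add: has_real_derivative_iff_has_vector_derivative[symmetric] has_field_derivative_at_within)
  qed
  have i1': "((\<lambda>t. h t * min (t-a) (b-t)) has_integral ((g m * (m-a) - f m) - (g a * (a-a) - f a))) {a..m}"
    by (rule has_integral_eq[OF _ i1]) (auto simp: m_def min_def)
  have i2': "((\<lambda>t. h t * min (t-a) (b-t)) has_integral ((g b * (b-b) + f b) - (g m * (b-m) + f m))) {m..b}"
    by (rule has_integral_eq[OF _ i2]) (auto simp: m_def min_def)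
  have "((\<lambda>t. h t * min (t-a) (b-t)) has_integral (((g m * (m-a) - f m) - (g a * (a-a) - f a)) + ((g b * (b-b) + f b) - (g m * (b-m) + f m)))) {a..b}"
    by (rule has_integral_combine[OF am i1' i2'])
  moreover have "((g m * (m-a) - f m) - (g a * (a-a) - f a)) + ((g b * (b-b) + f b) - (g m * (b-m) + f m)) = f a + f b - 2 * f m"
    by (simp add: m_def algebra_simps) (simp add: field_simps)
  ultimately show ?thesis unfolding m_def[symmetric] by metis
qed



definition Fc :: "real \<Rightarrow> real \<Rightarrow> real \<Rightarrow> real" where
 "Fc p a b = (if p = -1 then a*ln a + b*ln b - (a+b)*ln((a+b)/2)
   else if p = -2 then 2*ln((a+b)/2) - ln a - ln b
   else (a powr (p+2) + b powr (p+2) - 2*((a+b)/2) powr (p+2)) / ((p+2)*(p+1)))"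

lemma Fint:
  assumes a: "0 < a" and ab: "a < b"
  shows "((\<lambda>t. t powr p * min (t-a) (b-t)) has_integral Fc p a b) {a..b}"
proof -
  have m: "0 < (a+b)/2" using a ab by simp
  consider "p = -1" | "p = -2" | "p \<noteq> -1" "p \<noteq> -2" by blast
  then show ?thesis
  proof cases
    case 1
    have "((\<lambda>t. t powr p * min (t-a) (b-t)) has_integral
       ((a*ln a - a) + (b * ln b - b) - 2*(((a+b)/2) * ln ((a+b)/2) - (a+b)/2))) {a..b}"
    proof (rule tent[OF ab, where f="\<lambda>t. t * ln t - t" and g=ln])
      fix t assume t: "a \<le> t" "t \<le> b"
      then have t0: "0 < t" using a by simp
      show "((\<lambda>t. t * ln t - t) has_real_derivative ln t) (at t)"
        using t0 by (auto intro!: derivative_eq_intros)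
      show "(ln has_real_derivative t powr p) (at t)"
        using t0 1 by (auto intro!: derivative_eq_intros simp: powr_minus divide_simps)
    qed
    moreover have "(a*ln a - a) + (b * ln b - b) - 2*(((a+b)/2) * ln ((a+b)/2) - (a+b)/2) = Fc p a b"
      using 1 by (simp add: Fc_def field_simps)
    ultimately show ?thesis by (simp only:)
  next
    case 2
    have "((\<lambda>t. t powr p * min (t-a) (b-t)) has_integral
       ((- ln a) + (- ln b) - 2*(- ln ((a+b)/2)))) {a..b}"
    proof (rule tent[OF ab, where f="\<lambda>t. - ln t" and g="\<lambda>t. - 1/t"])
      fix t assume t: "a \<le> t" "t \<le> b"
      then have t0: "0 < t" using a by simp
      show "((\<lambda>t. - ln t) has_real_derivative - 1/t) (at t)"
        using t0 by (auto intro!: derivative_eq_intros)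
      show "((\<lambda>t. - 1/t) has_real_derivative t powr p) (at t)"
        using t0 2 by (auto intro!: derivative_eq_intros simp: powr_minus divide_simps power2_eq_square)
    qed
    then show ?thesis using 2 by (simp add: Fc_def algebra_simps)
  next
    case 3
    have p1: "p + 1 \<noteq> 0" "p + 2 \<noteq> 0" using 3 by auto
    have "((\<lambda>t. t powr p * min (t-a) (b-t)) has_integral
       (a powr (p+2) / ((p+2)*(p+1)) + b powr (p+2) / ((p+2)*(p+1)) - 2*(((a+b)/2) powr (p+2) / ((p+2)*(p+1))))) {a..b}"
    proof (rule tent[OF ab, where f="\<lambda>t. t powr (p+2) / ((p+2)*(p+1))" and g="\<lambda>t. t powr (p+1) / (p+1)"])
      fix t assume t: "a \<le> t" "t \<le> b"
      then have t0: "0 < t" using a by simp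
      show "((\<lambda>t. t powr (p+2) / ((p+2)*(p+1))) has_real_derivative t powr (p+1) / (p+1)) (at t)"
      proof -
        have "((\<lambda>t. t powr (p+2)) has_real_derivative (p+2) * t powr (p+1)) (at t)"
          using has_real_derivative_powr[OF t0, of "p+2"] by (simp add: add.commute)
        from DERIV_cdivide[OF this, of "(p+2)*(p+1)"] show ?thesis using p1 by simp
      qed
      show "((\<lambda>t. t powr (p+1) / (p+1)) has_real_derivative t powr p) (at t)"
      proof -
        have "((\<lambda>t. t powr (p+1)) has_real_derivative (p+1) * t powr p) (at t)"
          using has_real_derivative_powr[OF t0, of "p+1"] by simp
        from DERIV_cdivide[OF this, of "(p+1)"] show ?thesis using p1 by simp
      qed
    qed
    then show ?thesis using 3 by (simp add: Fc_def diff_divide_distrib add_divide_distrib)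
  qed
qed



lemma Fpos:
  assumes a: "0 < a" and ab: "a < b"
  shows "0 < Fc p a b"
proof -
  define c where "c = min (a powr p) (b powr p)"
  have c0: "0 < c" using a ab by (simp add: c_def)
  have I: "((\<lambda>t. c * min (t-a) (b-t)) has_integral (c*a^2/2 + c*b^2/2 - 2*(c*((a+b)/2)^2/2))) {a..b}"
  proof (rule tent[OF ab, where f="\<lambda>t. c*t^2/2" and g="\<lambda>t. c*t"])
    fix t
    show "((\<lambda>t. c*t^2/2) has_real_derivative c*t) (at t)"
      by (auto intro!: derivative_eq_intros)
    show "((\<lambda>t. c*t) has_real_derivative c) (at t)"
      by (auto intro!: derivative_eq_intros)
  qed
  have "c*a^2/2 + c*b^2/2 - 2*(c*((a+b)/2)^2/2) \<le> Fc p a b"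
  proof (rule has_integral_le[OF I Fint[OF a ab]])
    fix t assume t: "t \<in> {a..b}"
    have "c \<le> t powr p"
    proof (cases "p \<ge> 0")
      case True
      then have "a powr p \<le> t powr p" using t a by (intro powr_mono2) auto
      then show ?thesis by (simp add: c_def)
    next
      case False
      then have "b powr p \<le> t powr p" using t a by (intro powr_mono2') auto
      then show ?thesis by (simp add: c_def)
    qed
    moreover have "0 \<le> min (t-a) (b-t)" using t by auto
    ultimately show "c * min (t-a) (b-t) \<le> t powr p * min (t-a) (b-t)"
      by (rule mult_right_mono)
  qed
  moreover have "c*a^2/2 + c*b^2/2 - 2*(c*((a+b)/2)^2/2) = c * (b-a)^2/4"
    by (simp add: power2_eq_square field_simps)
  moreover have "0 < c * (b-a)^2/4" using c0 ab by simp
  ultimately show ?thesis by linarith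
qed

lemma lam_repr:
  assumes a: "0 < a" and ab: "a < b"
  shows "lam s a b = Fc (s-1) a b / Fc (s-2) a b"
proof -
  have ne: "a \<noteq> b" using ab by simp
  have m: "0 < (a+b)/2" using a ab by simp
  have b: "0 < b" using a ab by simp
  have P: "0 < Fc (s-2) a b" by (rule Fpos[OF a ab])
  consider "s = -1" | "s = 0" | "s = 1" | "s \<noteq> -1" "s \<noteq> 0" "s \<noteq> 1" by blast
  then show ?thesis
  proof cases
    case 1
    then show ?thesis using a b m ne by (simp add: lam_def Fc_def powr_minus field_simps)
  next
    case 2
    then show ?thesis using a b m ne by (simp add: lam_def Fc_def)
  next
    case 3
    have e: "(a powr (0+2) + b powr (0+2) - 2*((a+b)/2) powr (0+2)) / ((0+2)*(0+1)) = (b-a)^2/4"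
      using a b m by (simp add: powr_numeral power2_eq_square field_simps)
    define D where "D = a*ln a + b*ln b - (a+b)*ln((a+b)/2)"
    have "Fc (s-1) a b = (b-a)^2/4" using 3 e by (simp add: Fc_def)
    moreover have "Fc (s-2) a b = D" using 3 by (simp add: Fc_def D_def)
    moreover have "lam s a b = (b-a)^2/(4*D)" using 3 ne by (simp add: lam_def D_def)
    ultimately show ?thesis by (metis divide_divide_eq_left mult.commute)
  next
    case 4
    have s1: "s + 1 \<noteq> 0" "s - 1 \<noteq> 0" using 4 by auto
    have e1: "s - 1 + 2 = s + 1" "s - 1 + 1 = s" "s - 2 + 2 = s" "s - 2 + 1 = s - 1" by auto
    have P': "0 < (a powr s + b powr s - 2 * ((a+b)/2) powr s) / (s * (s - 1))"
      using P 4 by (simp add: Fc_def e1)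
    then have J: "a powr s + b powr s - 2 * ((a+b)/2) powr s \<noteq> 0" by auto
    have alg: "(s - 1) / (s + 1) * (u / v) = (u / ((s + 1) * s)) / (v / (s * (s - 1)))" if "v \<noteq> 0" for u v :: real
    proof -
      have "(u / ((s + 1) * s)) / (v / (s * (s - 1))) = (s * ((s - 1) * u)) / (s * ((s + 1) * v))"
        by (simp add: divide_divide_eq_left ac_simps)
      also have "\<dots> = ((s - 1) * u) / ((s + 1) * v)" using 4 by simp
      finally show ?thesis by simp
    qed
    show ?thesis using 4 ne s1 by (simp add: lam_def Fc_def e1 alg[OF J])
  qed
qed



lemma Fint_comb:
  assumes a: "0 < a" and ab: "a < b"
  shows "((\<lambda>t. (c * (t powr p1 - d * t powr p)) * min (t-a) (b-t)) has_integral
          c * (Fc p1 a b - d * Fc p a b)) {a..b}"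
proof -
  have "((\<lambda>t. c * (t powr p1 * min (t-a) (b-t) - d * (t powr p * min (t-a) (b-t)))) has_integral
          c * (Fc p1 a b - d * Fc p a b)) {a..b}"
    by (intro has_integral_mult_right has_integral_diff Fint[OF a ab])
  then show ?thesis by (rule has_integral_eq[rotated]) (simp add: algebra_simps)
qed

lemma ptH:
  fixes t H q r p p1 r1 :: real
  assumes t: "0 < t" and H: "0 < H" and q: "0 \<le> q"
    and e: "r1 = r + 1" "p = q + r" "p1 = q + r + 1"
  shows "H powr q * (t powr r1 - H * t powr r) \<le> t powr p1 - H * t powr p"
proof -
  have "t powr p1 - H * t powr p - H powr q * (t powr r1 - H * t powr r)
        = t powr r * ((t - H) * (t powr q - H powr q))"
  proof -
    have t': "0 \<le> t" using t by simp
    have x1: "t powr p = t powr q * t powr r" "t powr p1 = t * (t powr q * t powr r)" "t powr r1 = t * t powr r"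
      using t by (simp_all only: e powr_add powr_one[OF t'] ac_simps)
    show ?thesis unfolding x1 by (simp add: algebra_simps)
  qed
  moreover have "0 \<le> (t - H) * (t powr q - H powr q)"
  proof (cases "H \<le> t")
    case True then show ?thesis using q H by (intro mult_nonneg_nonneg) (auto intro: powr_mono2)
  next
    case False then show ?thesis using q t by (intro mult_nonpos_nonpos) (auto intro: powr_mono2)
  qed
  ultimately have "0 \<le> t powr p1 - H * t powr p - H powr q * (t powr r1 - H * t powr r)"
    by simp
  then show ?thesis by simp
qed

lemma ptG:
  fixes t H q r p p1 r1 :: real
  assumes t: "0 < t" and H: "0 < H" and q: "q \<le> 0"
    and e: "r1 = r + 1" "p = q + r" "p1 = q + r + 1"
  shows "t powr p1 - H * t powr p \<le> H powr q * (t powr r1 - H * t powr r)"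
proof -
  have "t powr p1 - H * t powr p - H powr q * (t powr r1 - H * t powr r)
        = t powr r * ((t - H) * (t powr q - H powr q))"
  proof -
    have t': "0 \<le> t" using t by simp
    have x1: "t powr p = t powr q * t powr r" "t powr p1 = t * (t powr q * t powr r)" "t powr r1 = t * t powr r"
      using t by (simp_all only: e powr_add powr_one[OF t'] ac_simps)
    show ?thesis unfolding x1 by (simp add: algebra_simps)
  qed
  moreover have "(t - H) * (t powr q - H powr q) \<le> 0"
  proof (cases "H \<le> t")
    case True then show ?thesis using q H by (intro mult_nonneg_nonpos) (auto intro: powr_mono2')
  next
    case False then show ?thesis using q t by (intro mult_nonpos_nonneg) (auto intro: powr_mono2')
  qed
  moreover have "0 < t powr r" using t by simp
  ultimately have "t powr p1 - H * t powr p - H powr q * (t powr r1 - H * t powr r) \<le> 0"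
    by (simp add: mult_nonneg_nonpos)
  then show ?thesis by simp
qed

lemma pm: "0 < x \<Longrightarrow> x powr (- numeral n) = 1 / x ^ numeral n"
  for x :: real by (simp add: powr_minus divide_inverse)
lemma f4_eq: "0 < a \<Longrightarrow> 0 < b \<Longrightarrow> Fc (-4) a b = (1/a^2 + 1/b^2 - 2/((a+b)/2)^2)/6"
proof -
  assume a: "0 < a" and b: "0 < b"
  have m: "0 < (a+b)/2" using a b by simp
  have "Fc (-4) a b = (a powr (-2) + b powr (-2) - 2*((a+b)/2) powr (-2)) / 6" by (simp add: Fc_def)
  then show ?thesis using a b m by (simp only: pm times_divide_eq_right mult_1_right)
qed
lemma f5_eq: "0 < a \<Longrightarrow> 0 < b \<Longrightarrow> Fc (-5) a b = (1/a^3 + 1/b^3 - 2/((a+b)/2)^3)/12"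
proof -
  assume a: "0 < a" and b: "0 < b"
  have m: "0 < (a+b)/2" using a b by simp
  have "Fc (-5) a b = (a powr (-3) + b powr (-3) - 2*((a+b)/2) powr (-3)) / 12" by (simp add: Fc_def)
  then show ?thesis using a b m by (simp only: pm times_divide_eq_right mult_1_right)
qed

lemma baseH_alg: "0 < a \<Longrightarrow> 0 < (b::real) \<Longrightarrow> (1/a^2 + 1/b^2 - 2/((a+b)/2)^2)/6 - 2 / (1/a + 1/b) * ((1/a^3 + 1/b^3 - 2/((a+b)/2)^3)/12) = (b-a)^4 / (6*a*b*(a+b)^4)"
proof -
  assume a: "0 < a" and b: "0 < b"
  have ab: "a + b > 0" using a b by simp
  define D where "D = 6*a^2*b^2*(a+b)^4"
  have D: "D > 0" using a b ab by (simp add: D_def)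
  have h: "2 / (1/a + 1/b) = 2*a*b/(a+b)" using a b by (simp add: field_simps)
  have e1: "(1/a^2 + 1/b^2 - 2/((a+b)/2)^2)/6 = ((a+b)^2*((a+b)^2*(a^2+b^2) - 8*a^2*b^2))/D"
    using a b ab by (simp add: field_simps D_def)
  have e2a: "(1/a^3 + 1/b^3 - 2/((a+b)/2)^3) = ((a+b)^3*(a^3+b^3) - 16*a^3*b^3)/(a^3*b^3*(a+b)^3)"
    using a b ab by (simp add: field_simps)
  have e2b: "2*a*b/(a+b) * (p/(a^3*b^3*(a+b)^3)/12) = p/D" for p
  proof -
    have "2*a*b/(a+b) * (p/(a^3*b^3*(a+b)^3)/12) = (2*a*b*p)/((a+b)*(a^3*b^3*(a+b)^3)*12)"
      by (simp add: divide_simps)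
    also have "\<dots> = (a*b*2*p)/(a*b*2*(6*a^2*b^2*(a+b)^4))"
    proof -
      have "(a+b)*(a^3*b^3*(a+b)^3)*12 = a*b*2*(6*a^2*b^2*(a+b)^4)" by algebra
      moreover have "2*a*b*p = a*b*2*p" by simp
      ultimately show ?thesis by metis
    qed
    also have "\<dots> = p/D" using a b by (simp add: D_def)
    finally show ?thesis .
  qed
  have e2: "2*a*b/(a+b) * ((1/a^3 + 1/b^3 - 2/((a+b)/2)^3)/12) = ((a+b)^3*(a^3+b^3) - 16*a^3*b^3)/D"
    unfolding e2a e2b ..
  have e3: "(b-a)^4 / (6*a*b*(a+b)^4) = (a*b*(b-a)^4) / D"
    using a b ab by (simp add: field_simps D_def power2_eq_square)
  have num: "(a+b)^2*((a+b)^2*(a^2+b^2) - 8*a^2*b^2) - ((a+b)^3*(a^3+b^3) - 16*a^3*b^3) = a*b*(b-a)^4"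
    by algebra
  show ?thesis unfolding h e1 e2 e3 using num by (simp add: diff_divide_distrib[symmetric])
qed

lemma baseH:
  assumes a: "0 < a" and ab: "a < b"
  shows "Fc (-4) a b - harm_mean a b * Fc (-5) a b = (b-a)^4 / (6*a*b*(a+b)^4)"
proof -
  have b: "0 < b" using a ab by simp
  have m: "0 < (a+b)/2" using a b by simp
  have f4: "Fc (-4) a b = (1/a^2 + 1/b^2 - 2/((a+b)/2)^2)/6"
    using f4_eq[OF a b] .
  have f5: "Fc (-5) a b = (1/a^3 + 1/b^3 - 2/((a+b)/2)^3)/12"
    using f5_eq[OF a b] .
  have ab0: "a + b \<noteq> 0" using a b by simp
  show ?thesis unfolding f4 f5 harm_mean_def using a b ab0
    using baseH_alg[OF a b] by simp
qed

lemma ln_ineq: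
  fixes u :: real
  assumes u: "1 \<le> u" shows "2 * ln u \<le> u - 1/u"
proof -
  define g where "g = (\<lambda>x::real. x - 1/x - 2 * ln x)"
  have d: "(g has_real_derivative (1 + 1/x^2 - 2/x)) (at x)" if "x \<in> {1..u}" for x
  proof -
    have x0: "0 < x" using that by simp
    show ?thesis
      unfolding g_def using x0 by (auto intro!: derivative_eq_intros simp: power2_eq_square field_simps)
  qed
  have n: "0 \<le> 1 + 1/x^2 - 2/x" if "x \<in> {1..u}" for x
  proof -
    have x0: "0 < x" using that by simp
    have "1 + 1/x^2 - 2/x = (1 - 1/x)^2" using x0 by (simp add: power2_eq_square field_simps)
    then show ?thesis by simp
  qed
  have "g 1 \<le> g u" by (rule deriv_nonneg_imp_mono[OF d n u])
  then show ?thesis by (simp add: g_def)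
qed

lemma baseG:
  assumes a: "0 < a" and ab: "a < b"
  shows "Fc (-2) a b - geom_mean a b * Fc (-3) a b \<le> 0"
proof -
  have b: "0 < b" using a ab by simp
  define G where "G = sqrt (a*b)"
  define m where "m = (a+b)/2"
  have G0: "0 < G" using a b by (simp add: G_def)
  have Gm: "G \<le> m" unfolding G_def m_def using a b by (intro arith_geo_mean_sqrt) auto
  have m0: "0 < m" using a b by (simp add: m_def)
  have GG: "G * G = a * b" using a b by (simp add: G_def)
  define u where "u = m / G"
  have u1: "1 \<le> u" using Gm G0 by (simp add: u_def)
  have "Fc (-2) a b = 2 * ln m - ln a - ln b" by (simp add: Fc_def m_def)
  also have "\<dots> = 2 * ln u"
    using a b G0 m0 by (simp add: u_def ln_div G_def ln_sqrt ln_mult field_simps)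
  finally have e1: "Fc (-2) a b = 2 * ln u" .
  have "geom_mean a b * Fc (-3) a b = G * ((1/a + 1/b - 2/m) / 2)"
    using a b m0 by (simp add: Fc_def geom_mean_def G_def m_def powr_minus inverse_eq_divide)
  also have "\<dots> = u - 1/u"
  proof -
    have "G * ((1/a + 1/b - 2/m) / 2) = G * (a+b)/(2*(a*b)) - G/m" using a b m0 by (simp add: field_simps)
    also have "\<dots> = G*m/(G*G) - G/m" by (simp add: GG m_def)
    also have "\<dots> = u - 1/u" using G0 m0 by (simp add: u_def field_simps)
    finally show ?thesis .
  qed
  finally show ?thesis using e1 ln_ineq[OF u1] by simp
qed



lemma mainH:
  assumes a: "0 < a" and ab: "a < b" and s: "-3 \<le> s"
  shows "harm_mean a b \<le> lam s a b"
proof -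
  have b: "0 < b" using a ab by simp
  define H where "H = harm_mean a b"
  have H0: "0 < H" using a b by (simp add: H_def harm_mean_def add_pos_pos)

  have "H powr (s+3) * (Fc (-4) a b - H * Fc (-5) a b) \<le> 1 * (Fc (s-1) a b - H * Fc (s-2) a b)"
  proof (rule has_integral_le[OF Fint_comb[OF a ab] Fint_comb[OF a ab]])
    fix t assume t: "t \<in> {a..b}"
    have t0: "0 < t" using t a by simp
    have "H powr (s+3) * (t powr (-4) - H * t powr (-5)) \<le> t powr (s-1) - H * t powr (s-2)"
      by (rule ptH) (use t0 H0 s in auto)
    moreover have "0 \<le> min (t-a) (b-t)" using t by simp
    ultimately show "H powr (s+3) * (t powr (-4) - H * t powr (-5)) * min (t-a) (b-t)
       \<le> 1 * (t powr (s-1) - H * t powr (s-2)) * min (t-a) (b-t)"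
      by (simp add: mult_right_mono)
  qed
  moreover have "0 \<le> H powr (s+3) * (Fc (-4) a b - H * Fc (-5) a b)"
    using baseH[OF a ab] a b by (simp add: H_def)
  ultimately have "H * Fc (s-2) a b \<le> Fc (s-1) a b" by simp
  then have "H \<le> Fc (s-1) a b / Fc (s-2) a b" using Fpos[OF a ab] by (simp add: pos_le_divide_eq)
  then show ?thesis by (simp add: H_def lam_repr[OF a ab])
qed

lemma mainG:
  assumes a: "0 < a" and ab: "a < b" and s: "s \<le> -1"
  shows "lam s a b \<le> geom_mean a b"
proof -
  have b: "0 < b" using a ab by simp
  define G where "G = geom_mean a b"
  have G0: "0 < G" using a b by (simp add: G_def geom_mean_def)
  have "1 * (Fc (s-1) a b - G * Fc (s-2) a b) \<le> G powr (s+1) * (Fc (-2) a b - G * Fc (-3) a b)"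
  proof (rule has_integral_le[OF Fint_comb[OF a ab] Fint_comb[OF a ab]])
    fix t assume t: "t \<in> {a..b}"
    have t0: "0 < t" using t a by simp
    have "t powr (s-1) - G * t powr (s-2) \<le> G powr (s+1) * (t powr (-2) - G * t powr (-3))"
      by (rule ptG) (use t0 G0 s in auto)
    moreover have "0 \<le> min (t-a) (b-t)" using t by simp
    ultimately show "1 * (t powr (s-1) - G * t powr (s-2)) * min (t-a) (b-t)
       \<le> G powr (s+1) * (t powr (-2) - G * t powr (-3)) * min (t-a) (b-t)"
      by (simp add: mult_right_mono)
  qed
  moreover have "G powr (s+1) * (Fc (-2) a b - G * Fc (-3) a b) \<le> 0"
    using baseG[OF a ab] G0 by (simp add: G_def mult_nonneg_nonpos)
  ultimately have "Fc (s-1) a b \<le> G * Fc (s-2) a b" by simp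
  then have "Fc (s-1) a b / Fc (s-2) a b \<le> G" using Fpos[OF a ab] by (simp add: pos_divide_le_eq)
  then show ?thesis by (simp add: G_def lam_repr[OF a ab])
qed

lemma lam_sym: "lam s a b = lam s b a"
  by (simp add: lam_def add.commute power2_commute algebra_simps)

lemma mainH_all:
  assumes s: "-3 \<le> s" and a: "0 < a" and b: "0 < b"
  shows "harm_mean a b \<le> lam s a b"
proof -
  consider "a < b" | "a = b" | "b < a" by linarith
  then show ?thesis
  proof cases
    case 1 then show ?thesis using mainH a s by blast
  next
    case 2 then show ?thesis using a by (simp add: lam_def harm_mean_def)
  next
    case 3 then show ?thesis using mainH[OF b 3 s] by (simp add: lam_sym[of s a b] harm_mean_def add.commute)
  qed
qed

lemma mainG_all:
  assumes s: "s \<le> -1" and a: "0 < a" and b: "0 < b"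
  shows "lam s a b \<le> geom_mean a b"
proof -
  consider "a < b" | "a = b" | "b < a" by linarith
  then show ?thesis
  proof cases
    case 1 then show ?thesis using mainG a s by blast
  next
    case 2 then show ?thesis using a by (simp add: lam_def geom_mean_def)
  next
    case 3 then show ?thesis using mainG[OF b 3 s] by (simp add: lam_sym[of s a b] geom_mean_def mult.commute)
  qed
qed



lemma cexH:
  assumes s: "s < -3"
  shows "\<exists>a b. 0 < a \<and> 0 < b \<and> lam s a b < harm_mean a b"
proof -
  define f where "f = (\<lambda>b::real. (s-1)/(s+1) * ((1 + b powr (s+1) - 2*((1+b)/2) powr (s+1)) /
                                (1 + b powr s - 2*((1+b)/2) powr s)))"
  have at: "filterlim (\<lambda>b::real. (1+b)/2) at_top at_top" by real_asymp
  have L1: "((\<lambda>b. b powr (s+1)) \<longlongrightarrow> 0) at_top"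
    by (rule tendsto_neg_powr) (use s filterlim_ident in auto)
  have L2: "((\<lambda>b. ((1+b)/2) powr (s+1)) \<longlongrightarrow> 0) at_top"
    by (rule tendsto_neg_powr) (use s at in auto)
  have L3: "((\<lambda>b. b powr s) \<longlongrightarrow> 0) at_top"
    by (rule tendsto_neg_powr) (use s filterlim_ident in auto)
  have L4: "((\<lambda>b. ((1+b)/2) powr s) \<longlongrightarrow> 0) at_top"
    by (rule tendsto_neg_powr) (use s at in auto)
  have "(f \<longlongrightarrow> (s-1)/(s+1) * ((1 + 0 - 2*0)/(1 + 0 - 2*0))) at_top"
    unfolding f_def by (intro tendsto_intros L1 L2 L3 L4) auto
  then have Lf: "(f \<longlongrightarrow> (s-1)/(s+1)) at_top" by simp
  have Lh: "((\<lambda>b. harm_mean 1 b) \<longlongrightarrow> 2) at_top" unfolding harm_mean_def by real_asymp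
  have "((\<lambda>b. f b - harm_mean 1 b) \<longlongrightarrow> (s-1)/(s+1) - 2) at_top" by (intro tendsto_diff Lf Lh)
  moreover have "(s-1)/(s+1) - 2 < 0"
  proof -
    have "2 * (s+1) < s - 1" using s by simp
    then have "(s-1)/(s+1) < 2" using s by (simp add: neg_divide_less_eq)
    then show ?thesis by simp
  qed
  ultimately have "eventually (\<lambda>b. f b - harm_mean 1 b < 0) at_top" by (rule order_tendstoD)
  moreover have "eventually (\<lambda>b. b > (1::real)) at_top" by (rule eventually_gt_at_top)
  ultimately have "eventually (\<lambda>b. f b - harm_mean 1 b < 0 \<and> b > 1) at_top" by (rule eventually_conj)
  then obtain N where N: "\<forall>b\<ge>N. f b - harm_mean 1 b < 0 \<and> b > 1" by (auto simp: eventually_at_top_linorder)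
  define b where "b = N"
  have b: "b > 1" "f b - harm_mean 1 b < 0" using N by (auto simp: b_def)
  have "lam s 1 b = f b" using b s by (simp add: lam_def f_def)
  then show ?thesis using b by (intro exI[of _ 1] exI[of _ b]) auto
qed

lemma mvt_aux:
  fixes y z \<sigma> :: real
  assumes y: "1 \<le> y" and yz: "y < z" and z: "z \<le> 2" and sg: "0 < \<sigma>"
  shows "\<sigma>/2 * (z - y) \<le> z powr \<sigma> - y powr \<sigma>"
proof -
  obtain \<xi> where \<xi>: "y < \<xi>" "\<xi> < z" "z powr \<sigma> - y powr \<sigma> = (z - y) * (\<sigma> * \<xi> powr (\<sigma> - 1))"
  proof -
    have "\<exists>\<xi>. y < \<xi> \<and> \<xi> < z \<and> ((\<lambda>x. x powr \<sigma>) z - (\<lambda>x. x powr \<sigma>) y = (z - y) * (\<sigma> * \<xi> powr (\<sigma> - 1)))"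
    proof (rule MVT2[OF yz])
      fix x assume "y \<le> x" "x \<le> z"
      then have "0 < x" using y by simp
      then show "((\<lambda>x. x powr \<sigma>) has_real_derivative \<sigma> * x powr (\<sigma> - 1)) (at x)"
        by (rule has_real_derivative_powr)
    qed
    then show ?thesis using that by auto
  qed
  have h: "1/2 \<le> \<xi> powr (\<sigma> - 1)"
  proof (cases "1 \<le> \<sigma>")
    case True
    then have "1 \<le> \<xi> powr (\<sigma> - 1)" using \<xi> y by (intro ge_one_powr_ge_zero) auto
    then show ?thesis by simp
  next
    case False
    have "2 powr (\<sigma> - 1) \<le> \<xi> powr (\<sigma> - 1)" using False \<xi> y z by (intro powr_mono2') auto
    moreover have "2 powr (-1) \<le> 2 powr (\<sigma> - 1)" using sg by (intro powr_mono) auto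
    moreover have "(2::real) powr (-1) = 1/2" by (simp add: powr_minus)
    ultimately show ?thesis by simp
  qed
  have "\<sigma>/2 * (z - y) \<le> (z - y) * (\<sigma> * \<xi> powr (\<sigma> - 1))"
  proof -
    have A: "\<sigma> * (1/2) \<le> \<sigma> * \<xi> powr (\<sigma> - 1)" using h sg by (intro mult_left_mono) auto
    have "(z - y) * (\<sigma> * (1/2)) \<le> (z - y) * (\<sigma> * \<xi> powr (\<sigma> - 1))"
      by (rule mult_left_mono[OF A]) (use yz in simp)
    then show ?thesis by (simp add: algebra_simps)
  qed
  then show ?thesis using \<xi> by simp
qed

lemma mvt_sq:
  fixes t G \<sigma> :: real
  assumes "1 \<le> t" "t \<le> 2" "1 \<le> G" "G \<le> 2" "0 < \<sigma>"
  shows "\<sigma>/2 * (t - G)^2 \<le> (t - G) * (t powr \<sigma> - G powr \<sigma>)"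
proof -
  consider "G < t" | "t = G" | "t < G" by linarith
  then show ?thesis
  proof cases
    case 1
    have "\<sigma>/2 * (t - G) \<le> t powr \<sigma> - G powr \<sigma>" using mvt_aux[of G t \<sigma>] 1 assms by auto
    then have X: "(t - G) * (\<sigma>/2 * (t - G)) \<le> (t - G) * (t powr \<sigma> - G powr \<sigma>)"
      by (rule mult_left_mono) (use 1 in simp)
    have e1: "\<sigma>/2 * (t - G)^2 = (t - G) * (\<sigma>/2 * (t - G))" by (simp add: power2_eq_square algebra_simps)
    show ?thesis unfolding e1 by (rule X)
  next
    case 2 then show ?thesis by simp
  next
    case 3
    have "\<sigma>/2 * (G - t) \<le> G powr \<sigma> - t powr \<sigma>" using mvt_aux[of t G \<sigma>] 3 assms by auto
    then have X: "(G - t) * (\<sigma>/2 * (G - t)) \<le> (G - t) * (G powr \<sigma> - t powr \<sigma>)"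
      by (rule mult_left_mono) (use 3 in simp)
    have e1: "\<sigma>/2 * (t - G)^2 = (G - t) * (\<sigma>/2 * (G - t))" by (simp add: power2_eq_square algebra_simps)
    have e2: "(t - G) * (t powr \<sigma> - G powr \<sigma>) = (G - t) * (G powr \<sigma> - t powr \<sigma>)" by (simp add: algebra_simps)
    show ?thesis unfolding e1 e2 by (rule X)
  qed
qed


lemma cexG:
  assumes s: "-1 < s"
  shows "\<exists>a b. 0 < a \<and> 0 < b \<and> geom_mean a b < lam s a b"
proof -
  define \<sigma> where "\<sigma> = s + 1"
  have sg: "0 < \<sigma>" using s by (simp add: \<sigma>_def)
  define k where "k = \<sigma> / (16 * 2 powr \<sigma>)"
  have k0: "0 < k" using sg by (simp add: k_def)
  define E where "E = (\<lambda>x::real. sqrt x * (1/2 + 1/(2*x) - 2/(1+x)) - (2 * ln((1+x)/2) - ln x))"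
  define P where "P = (\<lambda>x::real. ((1 - sqrt x)^4 + (x - sqrt x)^4 - 2*((1+x)/2 - sqrt x)^4)/12)"
  have LE: "((\<lambda>x. E x / P x) \<longlongrightarrow> 0) (at_right 1)" unfolding E_def P_def by real_asymp
  have ev1: "eventually (\<lambda>x. E x / P x < k) (at_right 1)" using order_tendstoD(2)[OF LE k0] .
  have ev2: "eventually (\<lambda>x. P x > 0) (at_right 1)" unfolding P_def by real_asymp
  have ev3: "eventually (\<lambda>x. x \<in> {1<..<2}) (at_right (1::real))" by (rule eventually_at_right_real) simp
  have evall: "eventually (\<lambda>x. E x / P x < k \<and> P x > 0 \<and> x \<in> {1<..<2}) (at_right 1)"
    by (intro eventually_conj ev1 ev2 ev3)
  then obtain x where x: "E x / P x < k" "P x > 0" "1 < x" "x < 2"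
    using eventually_happens[OF evall] by (auto simp: trivial_limit_def[symmetric])
  have EkP: "E x < k * P x" using x by (simp add: pos_divide_less_eq)
  define G where "G = sqrt x"
  have G1: "1 < G" using x by (simp add: G_def)
  have G2: "G < 2"
  proof -
    have "sqrt x < sqrt 4" by (rule real_sqrt_less_mono) (use x in simp)
    then show ?thesis by (simp add: G_def)
  qed
  have one: "(0::real) < 1" "1 < x" using x by auto
  have TP: "((\<lambda>t. (t-G)^2 * min (t-1) (x-t)) has_integral ((1-G)^4/12 + (x-G)^4/12 - 2*(((1+x)/2-G)^4/12))) {1..x}"
  proof (rule tent[OF x(3), where f="\<lambda>t. (t-G)^4/12" and g="\<lambda>t. (t-G)^3/3"])
    fix t
    show "((\<lambda>t. (t-G)^4/12) has_real_derivative (t-G)^3/3) (at t)"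
      by (auto intro!: derivative_eq_intros simp: field_simps eval_nat_numeral)
    show "((\<lambda>t. (t-G)^3/3) has_real_derivative (t-G)^2) (at t)"
      by (auto intro!: derivative_eq_intros simp: field_simps eval_nat_numeral)
  qed
  have PP: "(1-G)^4/12 + (x-G)^4/12 - 2*(((1+x)/2-G)^4/12) = P x"
    by (simp add: P_def G_def diff_divide_distrib add_divide_distrib)
  have "G powr \<sigma> * (Fc (-2) 1 x - G * Fc (-3) 1 x) + \<sigma>/16 * P x \<le> 1 * (Fc (s-1) 1 x - G * Fc (s-2) 1 x)"
  proof (rule has_integral_le[OF has_integral_add[OF Fint_comb[OF one] has_integral_mult_right[OF TP[unfolded PP]]] Fint_comb[OF one]])
    fix t assume t: "t \<in> {1..x}"
    have t1: "1 \<le> t" "t \<le> x" using t by auto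
    have t0: "0 < t" "0 \<le> t" using t1 by auto
    have t2: "t \<le> 2" using t1 x by simp
    have W0: "0 \<le> min (t-1) (x-t)" using t1 by simp
    have x1: "t powr (s-1) = t powr (-3) * (t powr \<sigma> * t)"
    proof -
      have "t powr (s-1) = t powr (-3 + \<sigma> + 1)" by (simp add: \<sigma>_def)
      also have "\<dots> = t powr (-3) * (t powr \<sigma> * t)" by (simp only: powr_add powr_one[OF t0(2)] mult.assoc)
      finally show ?thesis .
    qed
    have x2: "t powr (s-2) = t powr (-3) * t powr \<sigma>"
    proof -
      have "t powr (s-2) = t powr (-3 + \<sigma>)" by (simp add: \<sigma>_def)
      also have "\<dots> = t powr (-3) * t powr \<sigma>" by (simp only: powr_add)
      finally show ?thesis .
    qed
    have x3: "t powr (-2) = t powr (-3) * t"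
    proof -
      have "t powr (-2) = t powr (-3 + 1)" by simp
      also have "\<dots> = t powr (-3) * t" by (simp only: powr_add powr_one[OF t0(2)])
      finally show ?thesis .
    qed
    have diff: "(t powr (s-1) - G * t powr (s-2)) - G powr \<sigma> * (t powr (-2) - G * t powr (-3))
          = t powr (-3) * ((t - G) * (t powr \<sigma> - G powr \<sigma>))"
      unfolding x1 x2 x3 by (simp add: algebra_simps)
    have mv: "\<sigma>/2 * (t - G)^2 \<le> (t - G) * (t powr \<sigma> - G powr \<sigma>)"
      by (rule mvt_sq) (use t1 t2 G1 G2 sg in auto)
    have t3: "1/8 \<le> t powr (-3)"
    proof -
      have "t^3 \<le> 2^3" using t0 t2 by (intro power_mono) auto
      then have "1/8 \<le> 1 / t^3" using t0 by (simp add: field_simps)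
      then show ?thesis using t0 by (simp add: pm)
    qed
    have "\<sigma>/16 * (t - G)^2 = 1/8 * (\<sigma>/2 * (t - G)^2)" by simp
    also have "\<dots> \<le> t powr (-3) * (\<sigma>/2 * (t - G)^2)"
      by (rule mult_right_mono[OF t3]) (use sg in simp)
    also have "\<dots> \<le> t powr (-3) * ((t - G) * (t powr \<sigma> - G powr \<sigma>))"
      by (rule mult_left_mono[OF mv]) simp
    finally have key: "G powr \<sigma> * (t powr (-2) - G * t powr (-3)) + \<sigma>/16 * (t - G)^2 \<le> t powr (s-1) - G * t powr (s-2)"
      using diff by simp
    have "(G powr \<sigma> * (t powr (-2) - G * t powr (-3)) + \<sigma>/16 * (t - G)^2) * min (t-1) (x-t)
          \<le> (t powr (s-1) - G * t powr (s-2)) * min (t-1) (x-t)"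
      by (rule mult_right_mono[OF key W0])
    then show "G powr \<sigma> * (t powr (-2) - G * t powr (-3)) * min (t-1) (x-t) + \<sigma>/16 * ((t - G)^2 * min (t-1) (x-t))
          \<le> 1 * (t powr (s-1) - G * t powr (s-2)) * min (t-1) (x-t)"
      by (simp add: algebra_simps)
  qed
  then have main: "G powr \<sigma> * (Fc (-2) 1 x - G * Fc (-3) 1 x) + \<sigma>/16 * P x \<le> Fc (s-1) 1 x - G * Fc (s-2) 1 x"
    by simp
  have gm: "geom_mean 1 x = G" by (simp add: geom_mean_def G_def)
  have F2: "Fc (-2) 1 x = 2 * ln ((1+x)/2) - ln x" by (simp add: Fc_def)
  have F3: "Fc (-3) 1 x = 1/2 + 1/(2*x) - 2/(1+x)"
  proof -
    have "Fc (-3) 1 x = (1 powr (-1) + x powr (-1) - 2*((1+x)/2) powr (-1)) / 2" by (simp add: Fc_def)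
    then show ?thesis using x by (simp add: powr_minus field_simps)
  qed
  have FE: "Fc (-2) 1 x - G * Fc (-3) 1 x = - E x"
    unfolding F2 F3 E_def G_def by simp
  have E0: "0 \<le> E x" using baseG[OF one] FE gm by simp
  have "G powr \<sigma> * E x \<le> 2 powr \<sigma> * E x"
    by (rule mult_right_mono[OF _ E0]) (rule powr_mono2, use sg G2 G1 in auto)
  moreover have "2 powr \<sigma> * E x < 2 powr \<sigma> * (k * P x)"
    by (rule mult_strict_left_mono[OF EkP]) simp
  moreover have "2 powr \<sigma> * (k * P x) = \<sigma>/16 * P x" by (simp add: k_def)
  ultimately have "0 < Fc (s-1) 1 x - G * Fc (s-2) 1 x" using main FE by simp
  then have "G < Fc (s-1) 1 x / Fc (s-2) 1 x" using Fpos[OF one] by (simp add: pos_less_divide_eq)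
  then have "geom_mean 1 x < lam s 1 x" using lam_repr[OF one] gm by simp
  then show ?thesis using x by (intro exI[of _ 1] exI[of _ x]) auto
qed


theorem theorem3:
  shows "(\<forall>s::real. -3 \<le> s \<and> s \<le> -1 \<longrightarrow>
            (\<forall>a b::real. 0 < a \<and> 0 < b \<longrightarrow>
               harm_mean a b \<le> lam s a b \<and> lam s a b \<le> geom_mean a b))
       \<and> (\<forall>s::real. (\<forall>a b::real. 0 < a \<and> 0 < b \<longrightarrow> harm_mean a b \<le> lam s a b) \<longleftrightarrow> -3 \<le> s)
       \<and> (\<forall>s::real. (\<forall>a b::real. 0 < a \<and> 0 < b \<longrightarrow> lam s a b \<le> geom_mean a b) \<longleftrightarrow> s \<le> -1)"
proof (intro conjI)
  show "\<forall>s::real. -3 \<le> s \<and> s \<le> -1 \<longrightarrow>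
            (\<forall>a b::real. 0 < a \<and> 0 < b \<longrightarrow>
               harm_mean a b \<le> lam s a b \<and> lam s a b \<le> geom_mean a b)"
    using mainH_all mainG_all by auto
  show "\<forall>s::real. (\<forall>a b::real. 0 < a \<and> 0 < b \<longrightarrow> harm_mean a b \<le> lam s a b) \<longleftrightarrow> -3 \<le> s"
  proof (intro allI, rule iffI)
    fix s :: real
    assume A: "\<forall>a b::real. 0 < a \<and> 0 < b \<longrightarrow> harm_mean a b \<le> lam s a b"
    show "-3 \<le> s"
    proof (rule ccontr)
      assume "\<not> -3 \<le> s"
      then have "s < -3" by simp
      from cexH[OF this] obtain a b where ab: "0 < a" "0 < b" "lam s a b < harm_mean a b" by blast
      have "harm_mean a b \<le> lam s a b" using A ab(1,2) by blast
      with ab(3) show False by simp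
    qed
  next
    fix s :: real
    assume "-3 \<le> s"
    then show "\<forall>a b::real. 0 < a \<and> 0 < b \<longrightarrow> harm_mean a b \<le> lam s a b" using mainH_all by auto
  qed
  show "\<forall>s::real. (\<forall>a b::real. 0 < a \<and> 0 < b \<longrightarrow> lam s a b \<le> geom_mean a b) \<longleftrightarrow> s \<le> -1"
  proof (intro allI, rule iffI)
    fix s :: real
    assume A: "\<forall>a b::real. 0 < a \<and> 0 < b \<longrightarrow> lam s a b \<le> geom_mean a b"
    show "s \<le> -1"
    proof (rule ccontr)
      assume "\<not> s \<le> -1"
      then have "-1 < s" by simp
      from cexG[OF this] obtain a b where ab: "0 < a" "0 < b" "geom_mean a b < lam s a b" by blast
      have "lam s a b \<le> geom_mean a b" using A ab(1,2) by blast
      with ab(3) show False by simp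
    qed
  next
    fix s :: real
    assume "s \<le> -1"
    then show "\<forall>a b::real. 0 < a \<and> 0 < b \<longrightarrow> lam s a b \<le> geom_mean a b" using mainG_all by auto
  qed
qed

end
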